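(* Consider NEAR-DGD$^+$: $\mathbf{x}_k=\mathbf{Z}^{t(k)}\mathbf{y}_k$, $\mathbf{y}_{k+1}=\mathbf{x}_k-\alpha\nabla\mathbf{f}(\mathbf{x}_k)$, $k=0,1,2,\ldots$, for a sequence of nonnegative integers $t(k)$, started from a common point $y_{i,0}=s_0$. Suppose each $f_i$ is $\mu_i$-strongly convex with $L_i$-Lipschitz gradient, $x^\star$ is the minimizer of $h=\sum_if_i$, and $0<\alpha\le\min\{1/L,c_4\}$. Then for every $\delta>0$ and all $k=0,1,2,\ldots$, $$\|\bar x_{k+1}-x^\star\|^2\le c_1^2\|\bar x_k-x^\star\|^2+c_3^2\beta^{2t(k)},$$ with $c_1^2=1-\alpha c_2+\alpha\delta-\alpha^2\delta c_2$ and $c_3^2=\alpha(\alpha+\delta^{-1})D^2L^2$. Moreover, if $\alpha c_2<1$ and $\{t(k)\}$ is strictly increasing with $t(k)\to\infty$, then $\bar x_k\to x^\star$ and $x_{i,k}\to x^\star$ for every $i$.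
   Context: $\mathbf{Z}=\mathbf{W}\otimes I_p$ with $\mathbf{W}$ a symmetric doubly-stochastic $n\times n$ matrix of a connected network ($w_{ii}>0$, $w_{ij}>0$ iff neighbours), simple eigenvalue $1$, other eigenvalues in $(-1,1)$; $\beta\in(0,1)$ its second largest eigenvalue magnitude. $\mathbf{x}=(x_1;\ldots;x_n)$, $\nabla\mathbf{f}(\mathbf{x})=(\nabla f_1(x_1);\ldots;\nabla f_n(x_n))$, $\bar x_k=\frac1n\sum_ix_{i,k}$. Constants: $L=\max_iL_i$, $\mu_{\bar f}=\frac1n\sum_i\mu_i$, $L_{\bar f}=\frac1n\sum_iL_i$, $c_2=\frac{2\mu_{\bar f}L_{\bar f}}{\mu_{\bar f}+L_{\bar f}}$, $c_4=\frac{2}{\mu_{\bar f}+L_{\bar f}}$, $D=\|\mathbf{y}_0-\mathbf{u}^\star\|+\frac{\nu+4}{\nu}\|\mathbf{u}^\star\|$, $\mathbf{u}^\star=(\arg\min f_1;\ldots;\arg\min f_n)$, $\nu=2\alpha\min_i\frac{\mu_iL_i}{\mu_i+L_i}$. *)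

theory Defs
  imports "HOL-Analysis.Analysis"
begin

primrec matpow :: "real^'n^'n \<Rightarrow> nat \<Rightarrow> real^'n^'n" where
  "matpow W 0 = mat 1"
| "matpow W (Suc k) = W ** matpow W k"

definition strongly_convex_on :: "'a::real_inner set \<Rightarrow> real \<Rightarrow> ('a \<Rightarrow> real) \<Rightarrow> bool" where
  "strongly_convex_on S mu f \<longleftrightarrow> convex_on S (\<lambda>x. f x - mu / 2 * (norm x)\<^sup>2)"

definition mat_eigenvalue :: "real^'n^'n \<Rightarrow> real \<Rightarrow> bool" where
  "mat_eigenvalue W lam \<longleftrightarrow> (\<exists>v. v \<noteq> 0 \<and> W *v v = lam *s v)"

text \<open>Averaging multiplier Z^t y = (W^t \<otimes> I_p) y, agentwise.\<close>
definition kron_apply :: "real^'n^'n \<Rightarrow> ('n \<Rightarrow> 'a::real_vector) \<Rightarrow> ('n \<Rightarrow> 'a)" where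
  "kron_apply M y = (\<lambda>i. \<Sum>j\<in>UNIV. (M $ i $ j) *\<^sub>R y j)"

definition stack_norm :: "('n::finite \<Rightarrow> 'a::real_normed_vector) \<Rightarrow> real" where
  "stack_norm x = sqrt (\<Sum>i\<in>UNIV. (norm (x i))\<^sup>2)"

definition avg :: "('n::finite \<Rightarrow> 'a::real_vector) \<Rightarrow> 'a" where
  "avg x = (1 / real CARD('n)) *\<^sub>R (\<Sum>i\<in>UNIV. x i)"

end

theory Submission
  imports Defs
begin



lemma norm_diff_sq: fixes u v :: "'a::real_inner"
  shows "(norm (u - a *\<^sub>R v))\<^sup>2 = (norm u)\<^sup>2 - 2 * a * (u \<bullet> v) + a\<^sup>2 * (norm v)\<^sup>2"
  unfolding power2_norm_eq_inner by (simp add: inner_diff_left inner_diff_right inner_commute algebra_simps power2_eq_square)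
lemma norm_add_sq: fixes u v :: "'a::real_inner"
  shows "(norm (u + v))\<^sup>2 = (norm u)\<^sup>2 + 2 * (u \<bullet> v) + (norm v)\<^sup>2"
  unfolding power2_norm_eq_inner by (simp add: inner_add_left inner_add_right inner_commute algebra_simps)
lemma norm_sub_sq: fixes u v :: "'a::real_inner"
  shows "(norm (u - v))\<^sup>2 = (norm u)\<^sup>2 - 2 * (u \<bullet> v) + (norm v)\<^sup>2"
  unfolding power2_norm_eq_inner by (simp add: inner_diff_left inner_diff_right inner_commute algebra_simps)

lemma line_deriv:
  fixes f :: "'a::real_inner \<Rightarrow> real"
  assumes "\<And>z. (f has_derivative (\<lambda>h. G z \<bullet> h)) (at z)"
  shows "((\<lambda>t. f (x + t *\<^sub>R d)) has_field_derivative (G (x + t *\<^sub>R d) \<bullet> d)) (at t within S)"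
proof -
  have l: "((\<lambda>t. x + t *\<^sub>R d) has_derivative (\<lambda>s. s *\<^sub>R d)) (at t within S)"
    by (auto intro!: derivative_eq_intros)
  have "((\<lambda>t. f (x + t *\<^sub>R d)) has_derivative (\<lambda>s. G (x + t *\<^sub>R d) \<bullet> (s *\<^sub>R d))) (at t within S)"
    using has_derivative_compose[OF l assms] .
  then show ?thesis unfolding has_field_derivative_def
    by (rule has_derivative_eq_rhs) (auto simp: fun_eq_iff)
qed

lemma grad_ineq_convex:
  fixes \<phi> :: "'a::real_inner \<Rightarrow> real"
  assumes cv: "convex_on UNIV \<phi>" and d: "\<And>z. (\<phi> has_derivative (\<lambda>h. G z \<bullet> h)) (at z)"
  shows "\<phi> y \<ge> \<phi> x + G x \<bullet> (y - x)"
proof -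
  define \<psi> where "\<psi> t = \<phi> (x + t *\<^sub>R (y - x))" for t :: real
  have c: "convex_on UNIV \<psi>"
    unfolding \<psi>_def convex_on_def
  proof (intro conjI allI impI ballI)
    fix a b u v :: real assume uv: "0 \<le> u" "0 \<le> v" "u + v = 1"
    have "x + (u * a + v * b) *\<^sub>R (y - x) = u *\<^sub>R (x + a *\<^sub>R (y - x)) + v *\<^sub>R (x + b *\<^sub>R (y - x))"
      using uv by (simp add: algebra_simps flip: scaleR_add_left)
    then show "\<phi> (x + (u *\<^sub>R a + v *\<^sub>R b) *\<^sub>R (y - x)) \<le> u * \<phi> (x + a *\<^sub>R (y - x)) + v * \<phi> (x + b *\<^sub>R (y - x))"
      using cv uv unfolding convex_on_def by simp
  qed simp
  have "(\<psi> has_field_derivative (G x \<bullet> (y - x))) (at 0 within UNIV)"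
    unfolding \<psi>_def using line_deriv[OF d, of x "y - x" 0 UNIV] by simp
  from convex_on_imp_above_tangent[OF c _ _ _ this, of 1] have "\<psi> 1 - \<psi> 0 \<ge> G x \<bullet> (y - x)" by simp
  then show ?thesis unfolding \<psi>_def by simp
qed

lemma descent:
  fixes f :: "'a::real_inner \<Rightarrow> real"
  assumes d: "\<And>z. (f has_derivative (\<lambda>h. G z \<bullet> h)) (at z)"
    and lip: "\<And>z w. norm (G z - G w) \<le> L * norm (z - w)"
  shows "f y \<le> f x + G x \<bullet> (y - x) + L / 2 * (norm (y - x))\<^sup>2"
proof -
  define dd where "dd = y - x"
  define \<psi> where "\<psi> t = f (x + t *\<^sub>R dd) - t * (G x \<bullet> dd) - L / 2 * t\<^sup>2 * (norm dd)\<^sup>2" for t :: real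
  have "\<psi> 0 \<ge> \<psi> 1"
  proof (rule DERIV_nonpos_imp_nonincreasing[where f=\<psi>])
    fix t :: real assume t: "0 \<le> t" "t \<le> 1"
    have D: "DERIV \<psi> t :> (G (x + t *\<^sub>R dd) \<bullet> dd - G x \<bullet> dd - L / 2 * (2 * t) * (norm dd)\<^sup>2)"
      unfolding \<psi>_def
      by (rule line_deriv[OF d] derivative_eq_intros refl | simp)+
    have "G (x + t *\<^sub>R dd) \<bullet> dd - G x \<bullet> dd = (G (x + t *\<^sub>R dd) - G x) \<bullet> dd"
      by (simp add: inner_diff_left)
    also have "\<dots> \<le> norm (G (x + t *\<^sub>R dd) - G x) * norm dd" by (rule norm_cauchy_schwarz)
    also have "\<dots> \<le> L * norm (t *\<^sub>R dd) * norm dd"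
      using lip[of "x + t *\<^sub>R dd" x] by (simp add: mult_right_mono)
    also have "\<dots> = L * t * (norm dd)\<^sup>2" using t by (simp add: power2_eq_square)
    finally show "\<exists>y. DERIV \<psi> t :> y \<and> y \<le> 0" using D by (intro exI[of _ _]) auto
  qed simp
  then show ?thesis unfolding \<psi>_def dd_def by simp
qed




lemma coco_abstract:
  fixes \<phi> :: "'a::real_inner \<Rightarrow> real"
  assumes gi: "\<And>z w. \<phi> w \<ge> \<phi> z + Gp z \<bullet> (w - z)"
    and de: "\<And>z w. \<phi> w \<le> \<phi> z + Gp z \<bullet> (w - z) + M / 2 * (norm (w - z))\<^sup>2"
    and M: "M > 0"
  shows "M * ((Gp y - Gp x) \<bullet> (y - x)) \<ge> (norm (Gp y - Gp x))\<^sup>2"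
proof -
  have key: "\<phi> a - \<phi> b + Gp a \<bullet> (b - a) \<le> - (norm (Gp b - Gp a))\<^sup>2 / (2 * M)" for a b
  proof -
    define v where "v = Gp b - Gp a"
    define z where "z = b - (1 / M) *\<^sub>R v"
    have 1: "\<phi> z \<ge> \<phi> a + Gp a \<bullet> (z - a)" by (rule gi)
    have 2: "\<phi> z \<le> \<phi> b + Gp b \<bullet> (z - b) + M / 2 * (norm (z - b))\<^sup>2" by (rule de)
    have e1: "Gp a \<bullet> (z - a) = Gp a \<bullet> (b - a) + Gp a \<bullet> (z - b)" by (simp add: inner_diff_right)
    have e2: "Gp b \<bullet> (z - b) - Gp a \<bullet> (z - b) = - (1/M) * (norm v)\<^sup>2"
      by (simp add: z_def v_def inner_diff_left power2_norm_eq_inner diff_divide_distrib)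
    have e3: "M / 2 * (norm (z - b))\<^sup>2 = (norm v)\<^sup>2 / (2 * M)"
      using M by (simp add: z_def power2_eq_square field_simps)
    have "\<phi> a - \<phi> b + Gp a \<bullet> (b - a) \<le> - (1/M) * (norm v)\<^sup>2 + (norm v)\<^sup>2 / (2 * M)"
      using 1 2 e1 e2 e3 by linarith
    also have "\<dots> = - (norm v)\<^sup>2 / (2 * M)" using M by (simp add: field_simps)
    finally show ?thesis by (simp add: v_def)
  qed
  note k1 = key[of x y] and k2 = key[of y x]
  have "norm (Gp x - Gp y) = norm (Gp y - Gp x)" by (rule norm_minus_commute)
  moreover have "Gp x \<bullet> (y - x) + Gp y \<bullet> (x - y) = - ((Gp y - Gp x) \<bullet> (y - x))"
    by (simp add: inner_diff_left inner_diff_right inner_commute)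
  ultimately have "(Gp y - Gp x) \<bullet> (y - x) \<ge> (norm (Gp y - Gp x))\<^sup>2 / M"
    using k1 k2 by (simp add: field_simps) 
  then show ?thesis using M by (simp add: field_simps)
qed




lemma cocoercive:
  fixes f :: "'a::real_inner \<Rightarrow> real"
  assumes d: "\<And>z. (f has_derivative (\<lambda>h. G z \<bullet> h)) (at z)"
    and sc: "strongly_convex_on UNIV \<mu> f"
    and lip: "\<And>z w. norm (G z - G w) \<le> L * norm (z - w)"
  shows "(L + \<mu>) * ((G x - G y) \<bullet> (x - y)) \<ge> (norm (G x - G y))\<^sup>2 + \<mu> * L * (norm (x - y))\<^sup>2"
    and "(G x - G y) \<bullet> (x - y) \<ge> \<mu> * (norm (x - y))\<^sup>2"
proof -
  define \<phi> where "\<phi> z = f z - \<mu> / 2 * (norm z)\<^sup>2" for z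
  define Gp where "Gp z = G z - \<mu> *\<^sub>R z" for z
  have cv: "convex_on UNIV \<phi>" using sc unfolding strongly_convex_on_def \<phi>_def .
  have dp: "(\<phi> has_derivative (\<lambda>h. Gp z \<bullet> h)) (at z)" for z
  proof -
    have "((\<lambda>z. f z - \<mu> / 2 * (z \<bullet> z)) has_derivative (\<lambda>h. G z \<bullet> h - \<mu> / 2 * (h \<bullet> z + z \<bullet> h))) (at z)"
      by (auto intro!: derivative_eq_intros d simp: fun_eq_iff inner_commute)
    then show ?thesis unfolding \<phi>_def Gp_def power2_norm_eq_inner
      by (rule has_derivative_eq_rhs) (auto simp: fun_eq_iff inner_diff_left inner_commute algebra_simps)
  qed
  have gi: "\<phi> w \<ge> \<phi> z + Gp z \<bullet> (w - z)" for z w by (rule grad_ineq_convex[OF cv dp])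
  have de: "\<phi> w \<le> \<phi> z + Gp z \<bullet> (w - z) + M / 2 * (norm (w - z))\<^sup>2" if M: "M \<ge> L - \<mu>" for z w M
  proof -
    have 1: "f w \<le> f z + G z \<bullet> (w - z) + L / 2 * (norm (w - z))\<^sup>2" by (rule descent[OF d lip])
    have 2: "(norm w)\<^sup>2 = (norm z)\<^sup>2 + 2 * (z \<bullet> (w - z)) + (norm (w - z))\<^sup>2"
      by (simp add: power2_norm_eq_inner inner_diff_left inner_diff_right inner_commute)
    have 3: "Gp z \<bullet> (w - z) = G z \<bullet> (w - z) - \<mu> * (z \<bullet> (w - z))"
      by (simp add: Gp_def inner_diff_left)
    have 4: "(L - \<mu>) / 2 * (norm (w - z))\<^sup>2 \<le> M / 2 * (norm (w - z))\<^sup>2"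
      using M by (intro mult_right_mono) auto
    have 5: "\<mu> / 2 * (norm w)\<^sup>2 = \<mu> / 2 * (norm z)\<^sup>2 + \<mu> * (z \<bullet> (w - z)) + \<mu> / 2 * (norm (w - z))\<^sup>2"
      unfolding 2 by (simp add: ring_distribs)
    have 6: "(L - \<mu>) / 2 * (norm (w - z))\<^sup>2 = L / 2 * (norm (w - z))\<^sup>2 - \<mu> / 2 * (norm (w - z))\<^sup>2"
      by (simp add: field_simps)
    show ?thesis unfolding \<phi>_def using 1 3 4 5 6 by linarith
  qed
  define a where "a = (G x - G y) \<bullet> (x - y)"
  define b where "b = (norm (G x - G y))\<^sup>2"
  define c where "c = (norm (x - y))\<^sup>2"
  have pa: "(Gp x - Gp y) \<bullet> (x - y) = a - \<mu> * c"
    by (simp add: a_def c_def Gp_def inner_diff_left inner_diff_right power2_norm_eq_inner algebra_simps)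
  have pb: "(norm (Gp x - Gp y))\<^sup>2 = b - 2 * \<mu> * a + \<mu>\<^sup>2 * c"
  proof -
    have "Gp x - Gp y = (G x - G y) - \<mu> *\<^sub>R (x - y)" by (simp add: Gp_def algebra_simps)
    then show ?thesis unfolding a_def b_def c_def by (simp add: norm_diff_sq inner_commute)
  qed
  have mono: "a - \<mu> * c \<ge> 0"
  proof -
    have "\<phi> x \<ge> \<phi> y + Gp y \<bullet> (x - y)" "\<phi> y \<ge> \<phi> x + Gp x \<bullet> (y - x)" by (rule gi)+
    moreover have "Gp x \<bullet> (y - x) = - (Gp x \<bullet> (x - y))"
      by (metis inner_minus_right minus_diff_eq)
    ultimately have "(Gp x - Gp y) \<bullet> (x - y) \<ge> 0" by (simp add: inner_diff_left)
    then show ?thesis using pa by simp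
  qed
  then show "(G x - G y) \<bullet> (x - y) \<ge> \<mu> * (norm (x - y))\<^sup>2" by (simp add: a_def c_def)
  show "(L + \<mu>) * ((G x - G y) \<bullet> (x - y)) \<ge> (norm (G x - G y))\<^sup>2 + \<mu> * L * (norm (x - y))\<^sup>2"
  proof (cases "L > \<mu>")
    case True
    have "(L - \<mu>) * ((Gp x - Gp y) \<bullet> (x - y)) \<ge> (norm (Gp x - Gp y))\<^sup>2"
      by (rule coco_abstract[where \<phi>=\<phi>, OF gi de]) (use True in auto)
    then have "(L - \<mu>) * (a - \<mu> * c) \<ge> b - 2 * \<mu> * a + \<mu>\<^sup>2 * c" using pa pb by simp
    then show ?thesis unfolding a_def[symmetric] b_def[symmetric] c_def[symmetric]
      by (simp add: algebra_simps power2_eq_square)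
  next
    case False
    have e: "e * (a - \<mu> * c) \<ge> (norm (Gp x - Gp y))\<^sup>2" if "e > 0" for e
      using coco_abstract[where \<phi>=\<phi>, OF gi de, of e x y] that False pa by simp
    have "(norm (Gp x - Gp y))\<^sup>2 \<le> 0"
    proof (rule ccontr)
      assume n: "\<not> ?thesis"
      define B where "B = (norm (Gp x - Gp y))\<^sup>2"
      have Bp: "B > 0" using n B_def by simp
      define e where "e = B / (2 * (a - \<mu> * c + 1))"
      have ep: "e > 0" using Bp mono by (simp add: e_def)
      have "e * (a - \<mu> * c) \<le> e * (a - \<mu> * c + 1)" using ep by simp
      also have "\<dots> = B / 2" using mono unfolding e_def by (simp add: field_simps)
      finally show False using e[OF ep] Bp B_def by simp
    qed
    then have "Gp x - Gp y = 0" by simp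
    then have "G x - G y = \<mu> *\<^sub>R (x - y)" by (simp add: Gp_def algebra_simps)
    then have "a = \<mu> * c" "b = \<mu>\<^sup>2 * c"
      unfolding a_def b_def c_def by (simp_all add: power2_norm_eq_inner power_mult_distrib)
    then show ?thesis unfolding a_def[symmetric] b_def[symmetric] c_def[symmetric]
      by (simp add: algebra_simps power2_eq_square)
  qed
qed

lemma grad_step_contract:
  fixes G :: "'a::real_inner \<Rightarrow> 'a"
  assumes co: "(L + \<mu>) * ((G x - G y) \<bullet> (x - y)) \<ge> (norm (G x - G y))\<^sup>2 + \<mu> * L * (norm (x - y))\<^sup>2"
    and pos: "L + \<mu> > 0" and \<alpha>: "0 \<le> \<alpha>" "\<alpha> \<le> 2 / (\<mu> + L)"
  shows "(norm ((x - \<alpha> *\<^sub>R G x) - (y - \<alpha> *\<^sub>R G y)))\<^sup>2 \<le> (1 - \<alpha> * (2 * \<mu> * L / (\<mu> + L))) * (norm (x - y))\<^sup>2"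
proof -
  define a where "a = (G x - G y) \<bullet> (x - y)"
  define b where "b = (norm (G x - G y))\<^sup>2"
  define c where "c = (norm (x - y))\<^sup>2"
  have eq: "(x - \<alpha> *\<^sub>R G x) - (y - \<alpha> *\<^sub>R G y) = (x - y) - \<alpha> *\<^sub>R (G x - G y)" by (simp add: algebra_simps)
  have e: "(norm ((x - \<alpha> *\<^sub>R G x) - (y - \<alpha> *\<^sub>R G y)))\<^sup>2 = c - 2 * \<alpha> * a + \<alpha>\<^sup>2 * b"
    unfolding eq norm_diff_sq a_def b_def c_def by (simp add: inner_commute)
  have ca: "a \<ge> (b + \<mu> * L * c) / (L + \<mu>)" using co pos by (simp add: a_def b_def c_def field_simps)
  have b0: "b \<ge> 0" by (simp add: b_def)
  have "c - 2 * \<alpha> * a + \<alpha>\<^sup>2 * b \<le> c - 2 * \<alpha> * ((b + \<mu> * L * c) / (L + \<mu>)) + \<alpha>\<^sup>2 * b"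
  proof -
    have "2 * \<alpha> * ((b + \<mu> * L * c) / (L + \<mu>)) \<le> 2 * \<alpha> * a"
      by (rule mult_left_mono[OF ca]) (use \<alpha> in simp)
    then show ?thesis by linarith
  qed
  also have "\<dots> = (1 - \<alpha> * (2 * \<mu> * L / (\<mu> + L))) * c - \<alpha> * (2 / (\<mu> + L) - \<alpha>) * b"
    by (simp add: add.commute[of \<mu> L] divide_inverse algebra_simps power2_eq_square)
  also have "\<dots> \<le> (1 - \<alpha> * (2 * \<mu> * L / (\<mu> + L))) * c"
    using \<alpha> b0 by simp
  finally show ?thesis using e c_def by simp
qed




lemma sym_inner:
  fixes W :: "real^'n^'n"
  assumes "transpose W = W"
  shows "(W *v u) \<bullet> v = u \<bullet> (W *v v)"
proof -
  have "W *v u = u v* W" by (metis assms transpose_matrix_vector)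
  then show ?thesis by (simp add: dot_lmul_matrix)
qed

lemma ones_fix:
  fixes W :: "real^'n^'n"
  assumes "\<And>i. (\<Sum>j\<in>UNIV. W $ i $ j) = 1"
  shows "W *v vec 1 = vec 1"
  using assms by (simp add: matrix_vector_mult_def vec_eq_iff)

lemma inner_ones: "(vec 1 :: real^'n) \<bullet> vec 1 = real CARD('n)"
  by (simp add: inner_vec_def)

lemma spectral_bound:
  fixes W :: "real^'n^'n" and \<beta> :: real
  assumes W_sym: "transpose W = W"
    and W_rows: "\<And>i. (\<Sum>j\<in>UNIV. W $ i $ j) = 1"
    and W_eig1_simple: "dim {v. W *v v = v} = 1"
    and beta_bound: "\<And>lam. mat_eigenvalue W lam \<Longrightarrow> lam \<noteq> 1 \<Longrightarrow> \<bar>lam\<bar> \<le> \<beta>"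
    and u: "u \<bullet> vec 1 = 0"
  shows "norm (W *v u) \<le> \<beta> * norm u"
proof -
  define S where "S = {u :: real^'n. u \<bullet> vec 1 = 0}"
  define K where "K = S \<inter> sphere 0 1"
  define q where "q w = (norm (W *v w))\<^sup>2" for w
  have W1: "W *v vec 1 = vec 1" by (rule ones_fix[OF W_rows])
  have WS: "W *v w \<in> S" if "w \<in> S" for w
    using that sym_inner[OF W_sym, of w "vec 1"] W1 by (simp add: S_def)
  have Sclosed: "a *\<^sub>R w \<in> S" "w + z \<in> S" if "w \<in> S" "z \<in> S" for a w z
    using that by (auto simp: S_def inner_add_left)
  show ?thesis
  proof (cases "K = {}")
    case True
    have "u = 0"
    proof (rule ccontr)
      assume "u \<noteq> 0"
      then have "(1 / norm u) *\<^sub>R u \<in> K" using u by (simp add: K_def S_def)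
      then show False using True by simp
    qed
    then show ?thesis by simp
  next
    case False
    have "compact K" unfolding K_def S_def
    proof (intro closed_Int_compact compact_sphere)
      have "{u :: real^'n. u \<bullet> vec 1 = 0} = {x. inner (vec 1) x = 0}" by (auto simp: inner_commute)
      then show "closed {u :: real^'n. u \<bullet> vec 1 = 0}" using closed_hyperplane by metis
    qed
    moreover have "continuous_on K q" unfolding q_def
      by (intro continuous_intros linear_continuous_on matrix_vector_mul_linear linear_linear)
    ultimately obtain v where vK: "v \<in> K" and vmax: "\<And>w. w \<in> K \<Longrightarrow> q w \<le> q v"
      using continuous_attains_sup[OF _ False] by blast
    define lam where "lam = q v"
    have vS: "v \<in> S" and vn: "norm v = 1" using vK by (auto simp: K_def)
    have hom: "q w \<le> lam * (norm w)\<^sup>2" if "w \<in> S" for w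
    proof (cases "w = 0")
      case True then show ?thesis by (simp add: q_def)
    next
      case False
      have "(1 / norm w) *\<^sub>R w \<in> K" using that False by (simp add: K_def Sclosed)
      then have "q ((1 / norm w) *\<^sub>R w) \<le> lam" using vmax lam_def by blast
      moreover have "q ((1 / norm w) *\<^sub>R w) = q w / (norm w)\<^sup>2"
        by (simp add: q_def matrix_vector_mult_scaleR power_divide)
      ultimately show ?thesis using False by (simp add: field_simps)
    qed
    define A where "A w = W *v (W *v w)" for w
    have qA: "q w = w \<bullet> A w" for w
      unfolding q_def A_def power2_norm_eq_inner by (rule sym_inner[OF W_sym])
    have orth: "A v \<bullet> z = 0" if zS: "z \<in> S" and zv: "z \<bullet> v = 0" for z
    proof -
      define c where "c = (W *v v) \<bullet> (W *v z)"
      define d where "d = q z - lam * (norm z)\<^sup>2"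
      have ineq: "2 * s * c + s\<^sup>2 * d \<le> 0" for s
      proof -
        have wS: "v + s *\<^sub>R z \<in> S" using vS zS Sclosed by blast
        have "(norm (v + s *\<^sub>R z))\<^sup>2 = 1 + s\<^sup>2 * (norm z)\<^sup>2"
          using vn zv by (simp add: norm_add_sq inner_commute power_mult_distrib)
        moreover have "q (v + s *\<^sub>R z) = lam + 2 * s * c + s\<^sup>2 * q z"
          unfolding q_def lam_def c_def
          by (simp add: matrix_vector_right_distrib matrix_vector_mult_scaleR norm_add_sq power_mult_distrib)
        ultimately show ?thesis using hom[OF wS] by (simp add: d_def algebra_simps)
      qed
      have "c = 0"
      proof (rule ccontr)
        assume c0: "c \<noteq> 0"
        define e where "e = 1 / (\<bar>d\<bar> + 1)"
        have e0: "e > 0" by (simp add: e_def add_pos_nonneg)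
        have "e * \<bar>d\<bar> < 1" unfolding e_def by (simp add: field_simps)
        moreover have "e * (- \<bar>d\<bar>) \<le> e * d" using e0 by (intro mult_left_mono) auto
        ultimately have "e * d > -2" by simp
        then have "2 + e * d > 0" by simp
        moreover have "2 * (e * c) * c + (e * c)\<^sup>2 * d = e * c\<^sup>2 * (2 + e * d)"
          by (simp add: power2_eq_square algebra_simps)
        ultimately have "2 * (e * c) * c + (e * c)\<^sup>2 * d > 0" using e0 c0 by simp
        then show False using ineq[of "e * c"] by simp
      qed
      then show ?thesis unfolding c_def A_def using sym_inner[OF W_sym, of v "W *v z"] sym_inner[OF W_sym]
        by (metis A_def inner_commute)
    qed
    have AvS: "A v \<in> S" unfolding A_def using WS vS by blast
    define r where "r = A v - lam *\<^sub>R v"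
    have "(-lam) *\<^sub>R v \<in> S" using Sclosed(1) vS by blast
    then have "A v + (-lam) *\<^sub>R v \<in> S" using Sclosed(2) AvS by blast
    then have rS: "r \<in> S" unfolding r_def by simp
    have rv: "r \<bullet> v = 0"
    proof -
      have vv: "v \<bullet> v = 1" using vn by (simp add: norm_eq_1)
      show ?thesis unfolding r_def lam_def qA by (simp add: inner_diff_left inner_diff_right vv inner_commute)
    qed
    have "A v \<bullet> r = 0" by (rule orth[OF rS rv])
    then have "r \<bullet> r = 0" using rv unfolding r_def by (simp add: inner_diff_left inner_commute)
    then have Av: "A v = lam *\<^sub>R v" unfolding r_def by simp
    have lam0: "lam \<ge> 0" by (simp add: lam_def q_def)
    define m where "m = sqrt lam"
    have m0: "m \<ge> 0" and mm: "m * m = lam" using lam0 by (auto simp: m_def)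
    have v0: "v \<noteq> 0" using vn by auto
    define w where "w = W *v v + m *\<^sub>R v"
    have Ww: "W *v w = m *\<^sub>R w"
      using Av unfolding w_def A_def by (simp add: matrix_vector_right_distrib matrix_vector_mult_scaleR mm[symmetric] algebra_simps)
    have "m \<le> \<beta>"
    proof (cases "w = 0")
      case True
      then have "W *v v = (-m) *s v" by (simp add: w_def scalar_mult_eq_scaleR eq_neg_iff_add_eq_0)
      then have "mat_eigenvalue W (-m)" using v0 unfolding mat_eigenvalue_def by blast
      moreover have "-m \<noteq> 1" using m0 by linarith
      ultimately show ?thesis using beta_bound by fastforce
    next
      case False
      then have eig: "mat_eigenvalue W m" using Ww unfolding mat_eigenvalue_def by (metis scalar_mult_eq_scaleR)
      show ?thesis
      proof (cases "m = 1")
        case False then show ?thesis using beta_bound[OF eig] m0 by simp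
      next
        case True
        define E where "E = {v :: real^'n. W *v v = v}"
        have subE: "subspace E" unfolding E_def subspace_def
          by (simp add: matrix_vector_right_distrib matrix_vector_mult_scaleR)
        have oneE: "vec 1 \<in> E" using W1 by (simp add: E_def)
        have ne: "(vec 1 :: real^'n) \<noteq> 0" by (simp add: vec_eq_iff)
        have "span {vec 1 :: real^'n} = E"
          by (rule subspace_dim_equal) (use subE oneE W_eig1_simple ne in \<open>auto simp: E_def span_minimal\<close>)
        moreover have "w \<in> E" using Ww True by (simp add: E_def)
        ultimately obtain a where wa: "w = a *\<^sub>R vec 1" by (auto simp: span_singleton)
        have "w \<in> S" unfolding w_def using WS[OF vS] vS Sclosed by blast
        then have "a * real CARD('n) = 0" using wa by (simp add: S_def inner_ones)
        then have "w = 0" using wa by simp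
        with \<open>w \<noteq> 0\<close> show ?thesis by simp
      qed
    qed
    then have "m * m \<le> \<beta> * \<beta>" using m0 by (intro mult_mono) auto
    then have "lam \<le> \<beta>\<^sup>2" using mm by (simp add: power2_eq_square)
    have "(norm (W *v u))\<^sup>2 \<le> lam * (norm u)\<^sup>2" using hom[of u] u by (simp add: q_def S_def)
    also have "\<dots> \<le> \<beta>\<^sup>2 * (norm u)\<^sup>2" using \<open>lam \<le> \<beta>\<^sup>2\<close> by (simp add: mult_right_mono)
    finally have "(norm (W *v u))\<^sup>2 \<le> (\<beta> * norm u)\<^sup>2" by (simp add: power_mult_distrib)
    moreover have "\<beta> \<ge> 0" using \<open>m \<le> \<beta>\<close> m0 by simp
    ultimately show ?thesis using power2_le_imp_le by simp
  qed
qed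




lemma matpow_ds:
  fixes W :: "real^'n^'n"
  assumes nn: "\<And>i j. W $ i $ j \<ge> 0"
    and rows: "\<And>i. (\<Sum>j\<in>UNIV. W $ i $ j) = 1"
    and cols: "\<And>j. (\<Sum>i\<in>UNIV. W $ i $ j) = 1"
  shows "(\<forall>i j. matpow W t $ i $ j \<ge> 0) \<and> (\<forall>i. (\<Sum>j\<in>UNIV. matpow W t $ i $ j) = 1)
         \<and> (\<forall>j. (\<Sum>i\<in>UNIV. matpow W t $ i $ j) = 1)"
proof (induction t)
  case 0
  show ?case by (simp add: mat_def)
next
  case (Suc t)
  let ?M = "matpow W t"
  have e: "matpow W (Suc t) $ i $ j = (\<Sum>k\<in>UNIV. W $ i $ k * ?M $ k $ j)" for i j
    by (simp add: matrix_matrix_mult_def)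
  have 1: "matpow W (Suc t) $ i $ j \<ge> 0" for i j
    unfolding e using Suc nn by (intro sum_nonneg mult_nonneg_nonneg) auto
  have 2: "(\<Sum>j\<in>UNIV. matpow W (Suc t) $ i $ j) = 1" for i
  proof -
    have "(\<Sum>j\<in>UNIV. matpow W (Suc t) $ i $ j) = (\<Sum>k\<in>UNIV. W $ i $ k * (\<Sum>j\<in>UNIV. ?M $ k $ j))"
      unfolding e sum_distrib_left by (rule sum.swap)
    also have "\<dots> = 1" using Suc rows by simp
    finally show ?thesis .
  qed
  have 3: "(\<Sum>i\<in>UNIV. matpow W (Suc t) $ i $ j) = 1" for j
  proof -
    have "(\<Sum>i\<in>UNIV. matpow W (Suc t) $ i $ j) = (\<Sum>k\<in>UNIV. (\<Sum>i\<in>UNIV. W $ i $ k) * ?M $ k $ j)"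
      unfolding e sum_distrib_right by (rule sum.swap)
    also have "\<dots> = 1" using Suc cols by simp
    finally show ?thesis .
  qed
  show ?case using 1 2 3 by blast
qed

definition proj :: "real^'n \<Rightarrow> real^'n" where
  "proj (v :: real^'n) = v - ((v \<bullet> vec 1) / real CARD('n)) *\<^sub>R vec 1"

lemma inner_ones': "(1 :: real^'n) \<bullet> 1 = real CARD('n)"
  by (simp add: inner_vec_def)

lemma proj_orth: "proj v \<bullet> vec 1 = 0"
  by (simp add: proj_def inner_diff_left inner_ones')

lemma proj_norm: fixes v :: "real^'n" shows "norm (proj v) \<le> norm v"
proof -
  have "v = proj v + ((v \<bullet> vec 1) / real CARD('n)) *\<^sub>R vec 1" by (simp add: proj_def)
  then have "(norm v)\<^sup>2 = (norm (proj v))\<^sup>2 + 2 * (proj v \<bullet> (((v \<bullet> vec 1) / real CARD('n)) *\<^sub>R vec 1))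
      + (norm (((v \<bullet> vec 1) / real CARD('n)) *\<^sub>R (vec 1 :: real^'n)))\<^sup>2"
    by (metis norm_add_sq)
  then have "(norm v)\<^sup>2 \<ge> (norm (proj v))\<^sup>2" using proj_orth[of v] by simp
  then show ?thesis by (rule power2_le_imp_le) simp
qed

lemma proj_comm:
  fixes W :: "real^'n^'n"
  assumes W_sym: "transpose W = W" and rows: "\<And>i. (\<Sum>j\<in>UNIV. W $ i $ j) = 1"
  shows "W *v proj v = proj (W *v v)"
proof -
  have W1: "W *v vec 1 = vec 1" by (rule ones_fix[OF rows])
  have "(W *v v) \<bullet> vec 1 = v \<bullet> vec 1" using sym_inner[OF W_sym, of v "vec 1"] W1 by simp
  then show ?thesis unfolding proj_def using W1
    by (simp add: matrix_vector_mult_diff_distrib matrix_vector_mult_scaleR)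
qed

lemma consensus_scalar:
  fixes W :: "real^'n^'n" and \<beta> :: real
  assumes W_sym: "transpose W = W"
    and W_rows: "\<And>i. (\<Sum>j\<in>UNIV. W $ i $ j) = 1"
    and W_eig1_simple: "dim {v. W *v v = v} = 1"
    and beta_bound: "\<And>lam. mat_eigenvalue W lam \<Longrightarrow> lam \<noteq> 1 \<Longrightarrow> \<bar>lam\<bar> \<le> \<beta>"
    and b0: "\<beta> \<ge> 0"
  shows "norm (proj (matpow W t *v v)) \<le> \<beta> ^ t * norm (proj v)"
proof (induction t)
  case 0 show ?case by simp
next
  case (Suc t)
  have "proj (matpow W (Suc t) *v v) = W *v proj (matpow W t *v v)"
    by (simp add: proj_comm[OF W_sym W_rows] matrix_vector_mul_assoc)
  also have "norm \<dots> \<le> \<beta> * norm (proj (matpow W t *v v))"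
    by (rule spectral_bound[OF W_sym W_rows W_eig1_simple beta_bound proj_orth])
  also have "\<dots> \<le> \<beta> * (\<beta> ^ t * norm (proj v))" using Suc b0 by (rule mult_left_mono)
  finally show ?case by simp
qed




lemma stack_norm_vec: "stack_norm z = norm (vec_lambda z)"
  by (simp add: stack_norm_def norm_vec_def L2_set_def)

lemma stack_norm_triangle: "stack_norm (\<lambda>i. z i + w i) \<le> stack_norm z + stack_norm w"
proof -
  have "vec_lambda (\<lambda>i. z i + w i) = vec_lambda z + vec_lambda w" by (simp add: vec_eq_iff)
  then show ?thesis unfolding stack_norm_vec by (metis norm_triangle_ineq)
qed

lemma stack_norm_diff: "stack_norm (\<lambda>i. z i - w i) \<le> stack_norm z + stack_norm w"
proof -
  have "vec_lambda (\<lambda>i. z i - w i) = vec_lambda z - vec_lambda w" by (simp add: vec_eq_iff)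
  then show ?thesis unfolding stack_norm_vec by (metis norm_triangle_ineq4)
qed

lemma stack_norm_sq: "(stack_norm z)\<^sup>2 = (\<Sum>i\<in>UNIV. (norm (z i))\<^sup>2)"
  unfolding stack_norm_def by (rule real_sqrt_pow2) (intro sum_nonneg; simp)

lemma stack_norm_nth: "norm (z i) \<le> stack_norm z"
proof -
  have "(norm (z i))\<^sup>2 \<le> (\<Sum>i\<in>UNIV. (norm (z i))\<^sup>2)"
    by (rule member_le_sum) auto
  then show ?thesis unfolding stack_norm_def by (intro real_le_rsqrt) 
qed

lemma stack_norm_ge0: "stack_norm z \<ge> 0" unfolding stack_norm_def by (intro real_sqrt_ge_zero sum_nonneg) simp

definition coord :: "('n::finite \<Rightarrow> 'a::euclidean_space) \<Rightarrow> 'a \<Rightarrow> real^'n" where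
  "coord y b = (\<chi> i. y i \<bullet> b)"

lemma kron_coord: "kron_apply M y i \<bullet> b = (M *v coord y b) $ i"
  by (simp add: kron_apply_def coord_def matrix_vector_mult_def inner_sum_left)

lemma avg_coord:
  fixes z :: "'n::finite \<Rightarrow> 'a::euclidean_space"
  shows "avg z \<bullet> b = (coord z b \<bullet> vec 1) / real CARD('n)"
  by (simp add: avg_def coord_def inner_vec_def inner_sum_left)

lemma norm_sq_basis: "(norm (x::'a::euclidean_space))\<^sup>2 = (\<Sum>b\<in>Basis. (x \<bullet> b)\<^sup>2)"
  unfolding power2_norm_eq_inner by (simp only: power2_eq_square euclidean_inner[of x x])

lemma stack_norm_coord:
  fixes z :: "'n::finite \<Rightarrow> 'a::euclidean_space"
  shows "(stack_norm z)\<^sup>2 = (\<Sum>b\<in>Basis. (norm (coord z b))\<^sup>2)"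
proof -
  have "(stack_norm z)\<^sup>2 = (\<Sum>i\<in>UNIV. \<Sum>b\<in>Basis. (z i \<bullet> b)\<^sup>2)"
    unfolding stack_norm_sq norm_sq_basis ..
  also have "\<dots> = (\<Sum>b\<in>Basis. \<Sum>i\<in>UNIV. (z i \<bullet> b)\<^sup>2)" by (rule sum.swap)
  also have "\<dots> = (\<Sum>b\<in>Basis. (norm (coord z b))\<^sup>2)"
    unfolding power2_norm_eq_inner by (simp add: coord_def inner_vec_def power2_eq_square)
  finally show ?thesis .
qed

lemma consensus_stack:
  fixes W :: "real^'n::finite^'n" and \<beta> :: real and y :: "'n \<Rightarrow> 'a::euclidean_space"
  assumes W_sym: "transpose W = W"
    and W_rows: "\<And>i. (\<Sum>j\<in>UNIV. W $ i $ j) = 1"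
    and W_eig1_simple: "dim {v. W *v v = v} = 1"
    and beta_bound: "\<And>lam. mat_eigenvalue W lam \<Longrightarrow> lam \<noteq> 1 \<Longrightarrow> \<bar>lam\<bar> \<le> \<beta>"
    and b0: "\<beta> \<ge> 0"
  shows "stack_norm (\<lambda>i. kron_apply (matpow W t) y i - avg (kron_apply (matpow W t) y))
         \<le> \<beta> ^ t * stack_norm y"
proof -
  let ?x = "kron_apply (matpow W t) y"
  let ?z = "\<lambda>i. ?x i - avg ?x"
  have cz: "coord ?z b = proj (matpow W t *v coord y b)" for b
  proof -
    have "coord ?x b = matpow W t *v coord y b"
      unfolding vec_eq_iff by (simp only: coord_def[of ?x] vec_lambda_beta kron_coord) simp
    moreover
    define cc where "cc = (coord ?x b \<bullet> vec 1) / real CARD('n)"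
    have comp: "coord ?z b $ i = coord ?x b $ i - cc" for i
      unfolding cc_def by (simp only: coord_def vec_lambda_beta inner_diff_left avg_coord)
    have "coord ?z b = coord ?x b - cc *\<^sub>R vec 1"
      unfolding vec_eq_iff using comp by simp
    then have "coord ?z b = proj (coord ?x b)" unfolding proj_def cc_def .
    ultimately show ?thesis by simp
  qed
  have "(stack_norm ?z)\<^sup>2 = (\<Sum>b\<in>Basis. (norm (proj (matpow W t *v coord y b)))\<^sup>2)"
    unfolding stack_norm_coord cz ..
  also have "\<dots> \<le> (\<Sum>b\<in>Basis. (\<beta> ^ t * norm (coord y b))\<^sup>2)"
  proof (rule sum_mono)
    fix b :: 'a
    have "norm (proj (matpow W t *v coord y b)) \<le> \<beta> ^ t * norm (proj (coord y b))"
      by (rule consensus_scalar[OF W_sym W_rows W_eig1_simple beta_bound b0])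
    also have "\<dots> \<le> \<beta> ^ t * norm (coord y b)"
      by (rule mult_left_mono[OF proj_norm]) (use b0 in simp)
    finally show "(norm (proj (matpow W t *v coord y b)))\<^sup>2 \<le> (\<beta> ^ t * norm (coord y b))\<^sup>2"
      by (rule power_mono) simp
  qed
  also have "\<dots> = (\<beta> ^ t * stack_norm y)\<^sup>2"
    by (simp add: power_mult_distrib stack_norm_coord sum_distrib_left)
  finally show ?thesis
    by (rule power2_le_imp_le) (intro mult_nonneg_nonneg zero_le_power b0 stack_norm_ge0)
qed

lemma avg_kron:
  fixes M :: "real^'n::finite^'n" and y :: "'n \<Rightarrow> 'a::real_vector"
  assumes cols: "\<And>j. (\<Sum>i\<in>UNIV. M $ i $ j) = 1"
  shows "avg (kron_apply M y) = avg y"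
proof -
  have "(\<Sum>i\<in>UNIV. kron_apply M y i) = (\<Sum>i\<in>UNIV. \<Sum>j\<in>UNIV. M $ i $ j *\<^sub>R y j)"
    by (simp add: kron_apply_def)
  also have "\<dots> = (\<Sum>j\<in>UNIV. \<Sum>i\<in>UNIV. M $ i $ j *\<^sub>R y j)" by (rule sum.swap)
  also have "\<dots> = (\<Sum>j\<in>UNIV. (\<Sum>i\<in>UNIV. M $ i $ j) *\<^sub>R y j)" by (simp only: scaleR_sum_left)
  also have "\<dots> = (\<Sum>j\<in>UNIV. y j)" by (simp add: cols)
  finally show ?thesis by (simp add: avg_def)
qed

lemma kron_diff: "kron_apply M (\<lambda>i. y i - z i) = (\<lambda>i. kron_apply M y i - kron_apply M z i)"
  by (simp add: kron_apply_def fun_eq_iff scaleR_diff_right sum_subtractf)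

lemma kron_nonexp:
  fixes M :: "real^'n::finite^'n" and y :: "'n \<Rightarrow> 'a::real_normed_vector"
  assumes nn: "\<And>i j. M $ i $ j \<ge> 0"
    and rows: "\<And>i. (\<Sum>j\<in>UNIV. M $ i $ j) = 1"
    and cols: "\<And>j. (\<Sum>i\<in>UNIV. M $ i $ j) = 1"
  shows "stack_norm (kron_apply M y) \<le> stack_norm y"
proof -
  have r: "(norm (kron_apply M y i))\<^sup>2 \<le> (\<Sum>j\<in>UNIV. M $ i $ j * (norm (y j))\<^sup>2)" for i
  proof -
    have "norm (kron_apply M y i) \<le> (\<Sum>j\<in>UNIV. norm (M $ i $ j *\<^sub>R y j))"
      unfolding kron_apply_def by (rule norm_sum)
    also have "\<dots> = (\<Sum>j\<in>UNIV. M $ i $ j * norm (y j))"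
      by (rule sum.cong) (simp_all add: nn)
    finally have "(norm (kron_apply M y i))\<^sup>2 \<le> (\<Sum>j\<in>UNIV. M $ i $ j * norm (y j))\<^sup>2"
      by (rule power_mono) simp
    also have "(\<Sum>j\<in>UNIV. M $ i $ j * norm (y j)) = (\<Sum>j\<in>UNIV. M $ i $ j *\<^sub>R norm (y j))" by simp
    also have "(\<Sum>j\<in>UNIV. M $ i $ j *\<^sub>R norm (y j))\<^sup>2 \<le> (\<Sum>j\<in>UNIV. M $ i $ j * (norm (y j))\<^sup>2)"
      by (rule convex_on_sum[OF _ _ convex_power2, of UNIV "\<lambda>j. M $ i $ j" "\<lambda>j. norm (y j)"])
        (simp_all add: nn rows)
    finally show ?thesis .
  qed
  have "(stack_norm (kron_apply M y))\<^sup>2 \<le> (\<Sum>i\<in>UNIV. \<Sum>j\<in>UNIV. M $ i $ j * (norm (y j))\<^sup>2)"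
    unfolding stack_norm_sq by (rule sum_mono[OF r])
  also have "\<dots> = (\<Sum>j\<in>UNIV. \<Sum>i\<in>UNIV. M $ i $ j * (norm (y j))\<^sup>2)" by (rule sum.swap)
  also have "\<dots> = (\<Sum>j\<in>UNIV. (\<Sum>i\<in>UNIV. M $ i $ j) * (norm (y j))\<^sup>2)" by (simp only: sum_distrib_right)
  also have "\<dots> = (stack_norm y)\<^sup>2" by (simp only: cols mult_1 stack_norm_sq)
  finally show ?thesis by (rule power2_le_imp_le) (rule stack_norm_ge0)
qed




lemma convex_on_sum_fun:
  assumes "finite I" "\<And>i. i \<in> I \<Longrightarrow> convex_on S (f i)" and "convex S"
  shows "convex_on S (\<lambda>x. \<Sum>i\<in>I. f i x)"
  using assms
proof (induction I rule: finite_induct)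
  case empty then show ?case by (simp add: convex_on_const)
next
  case (insert a I)
  then have "convex_on S (\<lambda>x. f a x + (\<Sum>i\<in>I. f i x))" by (intro convex_on_add) auto
  then show ?case using insert by simp
qed

lemma grad_zero:
  fixes f :: "'a::real_inner \<Rightarrow> real"
  assumes "(f has_derivative (\<lambda>h. G \<bullet> h)) (at x)" and "\<And>z. f x \<le> f z"
  shows "G = 0"
proof -
  have "(\<lambda>h. G \<bullet> h) = (\<lambda>v. 0)"
    by (rule differential_zero_maxmin[of x UNIV]) (use assms in auto)
  then have "G \<bullet> G = 0" by metis
  then show ?thesis by simp
qed

lemma young_sq:
  fixes a e :: "'a::real_inner"
  assumes s: "s > 0"
  shows "(norm (a - e))\<^sup>2 \<le> (1 + s) * (norm a)\<^sup>2 + (1 + 1 / s) * (norm e)\<^sup>2"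
proof -
  have 1: "(norm (a - e))\<^sup>2 = (norm a)\<^sup>2 - 2 * (a \<bullet> e) + (norm e)\<^sup>2" by (rule norm_sub_sq)
  have 2: "- (a \<bullet> e) \<le> norm a * norm e"
    using norm_cauchy_schwarz[of a "-e"] by simp
  have 3: "2 * (norm a * norm e) \<le> s * (norm a)\<^sup>2 + (norm e)\<^sup>2 / s"
  proof -
    have "0 \<le> (s * norm a - norm e)\<^sup>2" by simp
    then have "2 * s * (norm a * norm e) \<le> (s * norm a)\<^sup>2 + (norm e)\<^sup>2"
      by (simp add: power2_eq_square algebra_simps)
    then have "2 * (norm a * norm e) \<le> ((s * norm a)\<^sup>2 + (norm e)\<^sup>2) / s"
      using s by (simp add: field_simps)
    also have "\<dots> = s * (norm a)\<^sup>2 + (norm e)\<^sup>2 / s"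
      using s by (simp add: power2_eq_square field_simps)
    finally show ?thesis .
  qed
  have "(1 + s) * (norm a)\<^sup>2 + (1 + 1 / s) * (norm e)\<^sup>2 = (norm a)\<^sup>2 + (norm e)\<^sup>2 + (s * (norm a)\<^sup>2 + (norm e)\<^sup>2 / s)"
    by (simp add: algebra_simps)
  then show ?thesis using 1 2 3 by linarith
qed

lemma avg_diff: "avg (\<lambda>i. a i - b i) = avg a - avg b"
  by (simp add: avg_def sum_subtractf scaleR_diff_right)

lemma avg_scale: "avg (\<lambda>i. c *\<^sub>R a i) = c *\<^sub>R avg a"
  by (simp add: avg_def scaleR_sum_right)

lemma avg_const: "avg (\<lambda>i::'n::finite. c) = c"
  by (simp add: avg_def sum_constant_scaleR)

lemma avg_norm_bound:
  fixes w :: "'n::finite \<Rightarrow> 'a::real_normed_vector"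
  assumes "\<And>i. norm (w i) \<le> B"
  shows "norm (avg w) \<le> B"
proof -
  have "norm (\<Sum>i\<in>UNIV. w i) \<le> (\<Sum>i\<in>(UNIV::'n set). B)"
    by (rule order.trans[OF norm_sum sum_mono]) (rule assms)
  then have "norm (\<Sum>i\<in>UNIV. w i) \<le> real CARD('n) * B" by simp
  then show ?thesis unfolding avg_def by (simp add: field_simps)
qed

lemma seq_conv:
  fixes a b :: "nat \<Rightarrow> real"
  assumes a0: "\<And>k. a k \<ge> 0" and rec: "\<And>k. a (Suc k) \<le> q * a k + b k"
    and q: "0 \<le> q" "q < 1" and b: "b \<longlonglongrightarrow> 0"
  shows "a \<longlonglongrightarrow> 0"
proof (rule LIMSEQ_I)
  fix r :: real assume r: "0 < r"
  define e where "e = r / 3"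
  have e0: "e > 0" using r by (simp add: e_def)
  have "e * (1 - q) > 0" using e0 q by simp
  from LIMSEQ_D[OF b this] obtain N1 where N1: "\<And>k. k \<ge> N1 \<Longrightarrow> norm (b k - 0) < e * (1 - q)" by blast
  have pw: "(\<lambda>m. q ^ m * a N1) \<longlonglongrightarrow> 0"
    by (rule tendsto_mult_left_zero) (rule LIMSEQ_power_zero, use q in simp)
  from LIMSEQ_D[OF pw e0] obtain N2 where N2: "\<And>m. m \<ge> N2 \<Longrightarrow> norm (q ^ m * a N1 - 0) < e" by blast
  have ind: "a (N1 + m) \<le> q ^ m * a N1 + e" for m
  proof (induction m)
    case 0 then show ?case using e0 by simp
  next
    case (Suc m)
    have "a (N1 + Suc m) \<le> q * a (N1 + m) + b (N1 + m)" using rec[of "N1 + m"] by simp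
    also have "\<dots> \<le> q * (q ^ m * a N1 + e) + e * (1 - q)"
      using Suc q N1[of "N1 + m"] by (intro add_mono mult_left_mono) auto
    also have "\<dots> = q ^ Suc m * a N1 + e" by (simp add: algebra_simps)
    finally show ?case .
  qed
  show "\<exists>no. \<forall>n\<ge>no. norm (a n - 0) < r"
  proof (intro exI allI impI)
    fix n assume n: "n \<ge> N1 + N2"
    define m where "m = n - N1"
    have m: "n = N1 + m" "m \<ge> N2" using n unfolding m_def by linarith+
    have "a n \<le> q ^ m * a N1 + e" using ind m by simp
    moreover have "q ^ m * a N1 < e" using N2[OF m(2)] by simp
    ultimately have "a n < r" using r unfolding e_def by linarith
    then show "norm (a n - 0) < r" using a0[of n] by simp
  qed
qed




theorem theorem3:
  fixes W :: "real^'n::finite^'n"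
    and f :: "'n \<Rightarrow> 'a::euclidean_space \<Rightarrow> real"
    and g :: "'n \<Rightarrow> 'a \<Rightarrow> 'a"
    and \<mu> Lc :: "'n \<Rightarrow> real"
    and \<alpha> \<beta> :: real
    and t :: "nat \<Rightarrow> nat"
    and x y :: "nat \<Rightarrow> 'n \<Rightarrow> 'a"
    and s0 xstar :: 'a
    and ustar :: "'n \<Rightarrow> 'a"
  assumes W_sym: "transpose W = W"
    and W_nonneg: "\<And>i j. W $ i $ j \<ge> 0"
    and W_rows: "\<And>i. (\<Sum>j\<in>UNIV. W $ i $ j) = 1"
    and W_cols: "\<And>j. (\<Sum>i\<in>UNIV. W $ i $ j) = 1"
    and W_diag: "\<And>i. W $ i $ i > 0"
    and W_connected: "\<And>i j. (i, j) \<in> {(a, b). W $ a $ b > 0}\<^sup>*"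
    and W_eig1_simple: "dim {v. W *v v = v} = 1"
    and W_eig_other: "\<And>lam. mat_eigenvalue W lam \<Longrightarrow> lam \<noteq> 1 \<Longrightarrow> -1 < lam \<and> lam < 1"
    and beta_bound: "\<And>lam. mat_eigenvalue W lam \<Longrightarrow> lam \<noteq> 1 \<Longrightarrow> \<bar>lam\<bar> \<le> \<beta>"
    and beta_attained: "\<exists>lam. mat_eigenvalue W lam \<and> lam \<noteq> 1 \<and> \<bar>lam\<bar> = \<beta>"
    and beta_pos: "0 < \<beta>" and beta_lt1: "\<beta> < 1"
    and mu_pos: "\<And>i. 0 < \<mu> i"
    and L_pos: "\<And>i. 0 < Lc i"
    and f_grad: "\<And>i z. (f i has_derivative (\<lambda>h. g i z \<bullet> h)) (at z)"
    and f_sconv: "\<And>i. strongly_convex_on UNIV (\<mu> i) (f i)"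
    and g_lip: "\<And>i z w. norm (g i z - g i w) \<le> Lc i * norm (z - w)"
    and ustar_min: "\<And>i z. f i (ustar i) \<le> f i z"
    and xstar_min: "\<And>z. (\<Sum>i\<in>UNIV. f i xstar) \<le> (\<Sum>i\<in>UNIV. f i z)"
    and init: "\<And>i. y 0 i = s0"
    and x_step: "\<And>k. x k = kron_apply (matpow W (t k)) (y k)"
    and y_step: "\<And>k i. y (Suc k) i = x k i - \<alpha> *\<^sub>R g i (x k i)"
    and alpha_pos: "0 < \<alpha>"
    and alpha_le: "\<alpha> \<le> 1 / Max (range Lc)"
    and alpha_le_c4: "\<alpha> \<le> 2 / ((\<Sum>i\<in>UNIV. \<mu> i) / real CARD('n) + (\<Sum>i\<in>UNIV. Lc i) / real CARD('n))"
  shows "let L = Max (range Lc);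
             \<mu>f = (\<Sum>i\<in>UNIV. \<mu> i) / real CARD('n);
             Lf = (\<Sum>i\<in>UNIV. Lc i) / real CARD('n);
             c2 = 2 * \<mu>f * Lf / (\<mu>f + Lf);
             \<nu> = 2 * \<alpha> * Min (range (\<lambda>i. \<mu> i * Lc i / (\<mu> i + Lc i)));
             D = stack_norm (\<lambda>i. y 0 i - ustar i) + (\<nu> + 4) / \<nu> * stack_norm ustar
         in (\<forall>\<delta>>0. \<forall>k.
               (norm (avg (x (Suc k)) - xstar))\<^sup>2
                 \<le> (1 - \<alpha> * c2 + \<alpha> * \<delta> - \<alpha>\<^sup>2 * \<delta> * c2) * (norm (avg (x k) - xstar))\<^sup>2
                   + \<alpha> * (\<alpha> + 1 / \<delta>) * D\<^sup>2 * L\<^sup>2 * \<beta> ^ (2 * t k))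
          \<and> (\<alpha> * c2 < 1 \<and> strict_mono t \<and> filterlim t at_top sequentially \<longrightarrow>
               (\<lambda>k. avg (x k)) \<longlonglongrightarrow> xstar \<and> (\<forall>i. (\<lambda>k. x k i) \<longlonglongrightarrow> xstar))"
proof -
  define n where "n = real CARD('n)"
  have n0: "n > 0" by (simp add: n_def)
  define L where "L = Max (range Lc)"
  define \<mu>f where "\<mu>f = (\<Sum>i\<in>UNIV. \<mu> i) / real CARD('n)"
  define Lf where "Lf = (\<Sum>i\<in>UNIV. Lc i) / real CARD('n)"
  define c2 where "c2 = 2 * \<mu>f * Lf / (\<mu>f + Lf)"
  define \<nu> where "\<nu> = 2 * \<alpha> * Min (range (\<lambda>i. \<mu> i * Lc i / (\<mu> i + Lc i)))"
  define U where "U = stack_norm ustar"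
  define S0 where "S0 = stack_norm (\<lambda>i. y 0 i - ustar i)"
  define D where "D = S0 + (\<nu> + 4) / \<nu> * U"
  have LcL: "Lc i \<le> L" for i unfolding L_def by (rule Max_ge) auto
  have L0: "L > 0" using LcL[of undefined] L_pos[of undefined] by linarith
  have U0: "U \<ge> 0" and S00: "S0 \<ge> 0" unfolding U_def S0_def by (rule stack_norm_ge0)+
  have co: "(Lc i + \<mu> i) * ((g i z - g i w) \<bullet> (z - w)) \<ge> (norm (g i z - g i w))\<^sup>2 + \<mu> i * Lc i * (norm (z - w))\<^sup>2" for i z w
    by (rule cocoercive(1)[OF f_grad f_sconv g_lip])
  have muL: "\<mu> i \<le> Lc i" for i
  proof -
    obtain b :: 'a where b: "b \<in> Basis" using nonempty_Basis by blast
    have nb: "norm b = 1" using b by simp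
    have "\<mu> i * (norm (b - 0))\<^sup>2 \<le> (g i b - g i 0) \<bullet> (b - 0)"
      by (rule cocoercive(2)[OF f_grad f_sconv g_lip])
    also have "\<dots> \<le> norm (g i b - g i 0) * norm (b - 0)" by (rule norm_cauchy_schwarz)
    also have "\<dots> \<le> Lc i * norm (b - 0) * norm (b - 0)"
      by (rule mult_right_mono[OF g_lip]) simp
    finally show ?thesis using nb by simp
  qed
  have gz: "g i (ustar i) = 0" for i
    by (rule grad_zero[OF f_grad]) (rule ustar_min)
  define m where "m i = \<mu> i * Lc i / (\<mu> i + Lc i)" for i
  have m0: "m i > 0" for i unfolding m_def using mu_pos[of i] L_pos[of i] by simp
  have minm: "Min (range m) \<le> m i" for i by (rule Min_le) auto
  have minpos: "Min (range m) > 0"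
  proof -
    have "Min (range m) \<in> range m" by (rule Min_in) auto
    then show ?thesis using m0 by auto
  qed
  have \<nu>_eq: "\<nu> = 2 * \<alpha> * Min (range m)" unfolding \<nu>_def m_def ..
  have \<nu>0: "\<nu> > 0" unfolding \<nu>_eq using alpha_pos minpos by simp
  have aL: "\<alpha> \<le> 1 / Lc i" for i
  proof -
    have "1 / L \<le> 1 / Lc i" using LcL[of i] L_pos[of i] by (simp add: frac_le)
    then show ?thesis using alpha_le unfolding L_def by linarith
  qed
  have a2: "\<alpha> \<le> 2 / (\<mu> i + Lc i)" for i
  proof -
    have "1 / Lc i \<le> 2 / (\<mu> i + Lc i)" using muL[of i] L_pos[of i] mu_pos[of i] by (simp add: field_simps)
    then show ?thesis using aL[of i] by linarith
  qed
  have \<nu>le: "\<nu> \<le> \<alpha> * (2 * \<mu> i * Lc i / (\<mu> i + Lc i))" for i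
  proof -
    have "\<nu> \<le> 2 * \<alpha> * m i" unfolding \<nu>_eq using minm[of i] alpha_pos by simp
    then show ?thesis unfolding m_def by (simp add: field_simps)
  qed
  have \<nu>1: "\<nu> \<le> 1"
  proof -
    fix i :: 'n
    have "\<alpha> * (2 * \<mu> i * Lc i / (\<mu> i + Lc i)) \<le> (1 / Lc i) * (2 * \<mu> i * Lc i / (\<mu> i + Lc i))"
      using aL[of i] mu_pos[of i] L_pos[of i] by (intro mult_right_mono) auto
    also have "\<dots> = 2 * \<mu> i / (\<mu> i + Lc i)" using L_pos[of i] by simp
    also have "\<dots> \<le> 1" using muL[of i] mu_pos[of i] by simp
    finally show ?thesis using \<nu>le[of i] by linarith
  qed
  have agent: "(norm (z - \<alpha> *\<^sub>R g i z - ustar i))\<^sup>2 \<le> (1 - \<nu>) * (norm (z - ustar i))\<^sup>2" for i z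
  proof -
    have "(norm ((z - \<alpha> *\<^sub>R g i z) - (ustar i - \<alpha> *\<^sub>R g i (ustar i))))\<^sup>2
          \<le> (1 - \<alpha> * (2 * \<mu> i * Lc i / (\<mu> i + Lc i))) * (norm (z - ustar i))\<^sup>2"
      by (rule grad_step_contract[where G="g i", OF co[of i z "ustar i"]]) (use mu_pos[of i] L_pos[of i] alpha_pos a2[of i] in auto)
    also have "\<dots> \<le> (1 - \<nu>) * (norm (z - ustar i))\<^sup>2"
      by (rule mult_right_mono) (use \<nu>le[of i] in simp_all)
    finally show ?thesis by (simp add: gz)
  qed
  define Gb where "Gb z = avg (\<lambda>i. g i z)" for z
  define hb where "hb z = (1 / n) * (\<Sum>i\<in>UNIV. f i z)" for z
  have hb_d: "(hb has_derivative (\<lambda>h. Gb z \<bullet> h)) (at z)" for z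
  proof -
    have "(hb has_derivative (\<lambda>h. (1 / n) * (\<Sum>i\<in>UNIV. g i z \<bullet> h))) (at z)"
      unfolding hb_def by (intro has_derivative_mult_right has_derivative_sum f_grad)
    then show ?thesis
      by (rule has_derivative_eq_rhs) (simp add: fun_eq_iff Gb_def avg_def n_def inner_sum_left)
  qed
  have hb_sc: "strongly_convex_on UNIV \<mu>f hb"
  proof -
    have cv: "convex_on UNIV (\<lambda>z. (1 / n) * (\<Sum>i\<in>UNIV. f i z - \<mu> i / 2 * (norm z)\<^sup>2))"
      by (intro convex_on_cmul convex_on_sum_fun) (use f_sconv n0 in \<open>auto simp: strongly_convex_on_def\<close>)
    have "(\<lambda>z. (1 / n) * (\<Sum>i\<in>UNIV. f i z - \<mu> i / 2 * (norm z)\<^sup>2)) = (\<lambda>z. hb z - \<mu>f / 2 * (norm z)\<^sup>2)"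
    proof (rule ext)
      fix z
      have "(\<Sum>i\<in>UNIV. f i z - \<mu> i / 2 * (norm z)\<^sup>2) = (\<Sum>i\<in>UNIV. f i z) - (\<Sum>i\<in>UNIV. \<mu> i) / 2 * (norm z)\<^sup>2"
        by (simp add: sum_subtractf sum_distrib_right sum_divide_distrib)
      then show "(1 / n) * (\<Sum>i\<in>UNIV. f i z - \<mu> i / 2 * (norm z)\<^sup>2) = hb z - \<mu>f / 2 * (norm z)\<^sup>2"
        unfolding hb_def \<mu>f_def n_def[symmetric] using n0 by (simp add: field_simps)
    qed
    then show ?thesis using cv unfolding strongly_convex_on_def by simp
  qed
  have Gb_lip: "norm (Gb z - Gb w) \<le> Lf * norm (z - w)" for z w
  proof -
    have "norm (\<Sum>i\<in>UNIV. g i z - g i w) \<le> (\<Sum>i\<in>UNIV. Lc i * norm (z - w))"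
      by (rule order.trans[OF norm_sum sum_mono]) (rule g_lip)
    then have "norm (\<Sum>i\<in>UNIV. g i z - g i w) / n \<le> (\<Sum>i\<in>UNIV. Lc i) * norm (z - w) / n"
      using n0 by (simp add: sum_distrib_right divide_right_mono)
    moreover have "Gb z - Gb w = (1 / n) *\<^sub>R (\<Sum>i\<in>UNIV. g i z - g i w)"
      by (simp add: Gb_def avg_def n_def sum_subtractf scaleR_diff_right)
    ultimately show ?thesis using n0 by (simp add: Lf_def n_def[symmetric])
  qed
  have Gbx: "Gb xstar = 0"
  proof (rule grad_zero[OF hb_d])
    fix z show "hb xstar \<le> hb z" unfolding hb_def using xstar_min[of z] n0 by (simp add: divide_right_mono)
  qed
  have \<mu>f0: "\<mu>f > 0" unfolding \<mu>f_def using mu_pos by (simp add: sum_pos)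
  have Lf0: "Lf > 0" unfolding Lf_def using L_pos by (simp add: sum_pos)
  have cob: "(Lf + \<mu>f) * ((Gb z - Gb xstar) \<bullet> (z - xstar)) \<ge> (norm (Gb z - Gb xstar))\<^sup>2 + \<mu>f * Lf * (norm (z - xstar))\<^sup>2" for z
    by (rule cocoercive(1)[OF hb_d hb_sc Gb_lip])
  have avgc: "(norm (z - \<alpha> *\<^sub>R Gb z - xstar))\<^sup>2 \<le> (1 - \<alpha> * c2) * (norm (z - xstar))\<^sup>2" for z
  proof -
    have "(norm ((z - \<alpha> *\<^sub>R Gb z) - (xstar - \<alpha> *\<^sub>R Gb xstar)))\<^sup>2 \<le> (1 - \<alpha> * (2 * \<mu>f * Lf / (\<mu>f + Lf))) * (norm (z - xstar))\<^sup>2"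
      by (rule grad_step_contract[where G=Gb, OF cob[of z]]) (use \<mu>f0 Lf0 alpha_pos alpha_le_c4 in \<open>simp_all add: \<mu>f_def Lf_def\<close>)
    then show ?thesis by (simp add: Gbx c2_def)
  qed
  have ds: "\<And>s. (\<forall>i j. matpow W s $ i $ j \<ge> 0) \<and> (\<forall>i. (\<Sum>j\<in>UNIV. matpow W s $ i $ j) = 1)
         \<and> (\<forall>j. (\<Sum>i\<in>UNIV. matpow W s $ i $ j) = 1)"
    by (rule matpow_ds[OF W_nonneg W_rows W_cols])
  have avgxy: "avg (x k) = avg (y k)" for k
    unfolding x_step by (rule avg_kron) (use ds in blast)
  have ysuc: "y (Suc k) = (\<lambda>i. x k i - \<alpha> *\<^sub>R g i (x k i))" for k
    by (rule ext) (rule y_step)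
  have R: "stack_norm (\<lambda>i. y k i - ustar i) \<le> S0 + 4 / \<nu> * U" for k
  proof (induction k)
    case 0 show ?case unfolding S0_def using U0 \<nu>0 by simp
  next
    case (Suc k)
    define R where "R = S0 + 4 / \<nu> * U"
    let ?M = "matpow W (t k)"
    have "stack_norm (\<lambda>i. x k i - ustar i)
        = stack_norm (\<lambda>i. kron_apply ?M (\<lambda>i. y k i - ustar i) i + (kron_apply ?M ustar i - ustar i))"
      unfolding x_step kron_diff by simp
    also have "\<dots> \<le> stack_norm (kron_apply ?M (\<lambda>i. y k i - ustar i)) + stack_norm (\<lambda>i. kron_apply ?M ustar i - ustar i)"
      by (rule stack_norm_triangle)
    also have "\<dots> \<le> stack_norm (\<lambda>i. y k i - ustar i) + (stack_norm (kron_apply ?M ustar) + U)"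
      unfolding U_def using ds[of "t k"]
      by (intro add_mono kron_nonexp stack_norm_diff) blast+
    also have "\<dots> \<le> R + 2 * U"
      using Suc kron_nonexp[of ?M ustar] ds[of "t k"] unfolding R_def U_def by auto
    finally have xb: "stack_norm (\<lambda>i. x k i - ustar i) \<le> R + 2 * U" .
    have "(stack_norm (\<lambda>i. y (Suc k) i - ustar i))\<^sup>2 \<le> (1 - \<nu>) * (stack_norm (\<lambda>i. x k i - ustar i))\<^sup>2"
      unfolding stack_norm_sq ysuc sum_distrib_left by (rule sum_mono) (rule agent)
    also have "\<dots> \<le> (1 - \<nu>) * (R + 2 * U)\<^sup>2"
      using \<nu>1 xb stack_norm_ge0 by (intro mult_left_mono power_mono) auto
    also have "\<dots> \<le> ((1 - \<nu> / 2) * (R + 2 * U))\<^sup>2"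
    proof -
      have "1 - \<nu> \<le> (1 - \<nu> / 2)\<^sup>2" by (simp add: power2_eq_square algebra_simps)
      then show ?thesis by (simp add: power_mult_distrib mult_right_mono)
    qed
    finally have "stack_norm (\<lambda>i. y (Suc k) i - ustar i) \<le> (1 - \<nu> / 2) * (R + 2 * U)"
      by (rule power2_le_imp_le) (use \<nu>1 U0 S00 \<nu>0 in \<open>simp add: R_def\<close>)
    also have "\<dots> \<le> R"
    proof -
      have "\<nu> / 2 * R \<ge> 2 * U" unfolding R_def using \<nu>0 S00 U0 by (simp add: field_simps)
      then have "(1 - \<nu> / 2) * (R + 2 * U) \<le> R + 2 * U - 2 * U - \<nu> * U"
        by (simp add: algebra_simps)
      then show ?thesis using \<nu>0 U0 by (smt (verit) mult_nonneg_nonneg)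
    qed
    finally show ?case unfolding R_def .
  qed
  have D_eq: "D = (S0 + 4 / \<nu> * U) + U" unfolding D_def using \<nu>0 by (simp add: field_simps)
  have D0: "D \<ge> 0" unfolding D_eq using S00 U0 \<nu>0 by simp
  have ynorm: "stack_norm (y k) \<le> D" for k
  proof -
    have "stack_norm (y k) = stack_norm (\<lambda>i. (y k i - ustar i) + ustar i)" by simp
    also have "\<dots> \<le> stack_norm (\<lambda>i. y k i - ustar i) + U" unfolding U_def by (rule stack_norm_triangle)
    also have "\<dots> \<le> D" unfolding D_eq using R[of k] by simp
    finally show ?thesis .
  qed
  have cons: "stack_norm (\<lambda>i. x k i - avg (x k)) \<le> \<beta> ^ t k * D" for k
  proof -
    have "stack_norm (\<lambda>i. x k i - avg (x k)) \<le> \<beta> ^ t k * stack_norm (y k)"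
      unfolding x_step by (rule consensus_stack[OF W_sym W_rows W_eig1_simple, where \<beta>=\<beta>]) (erule (1) beta_bound, rule less_imp_le[OF beta_pos])
    also have "\<dots> \<le> \<beta> ^ t k * D" using ynorm[of k] beta_pos by (simp add: mult_left_mono)
    finally show ?thesis .
  qed
  have main: "(norm (avg (x (Suc k)) - xstar))\<^sup>2
      \<le> (1 - \<alpha> * c2 + \<alpha> * \<delta> - \<alpha>\<^sup>2 * \<delta> * c2) * (norm (avg (x k) - xstar))\<^sup>2
        + \<alpha> * (\<alpha> + 1 / \<delta>) * D\<^sup>2 * L\<^sup>2 * \<beta> ^ (2 * t k)" if \<delta>: "\<delta> > 0" for \<delta> k
  proof -
    define xb where "xb = avg (x k)"
    define a where "a = xb - \<alpha> *\<^sub>R Gb xb - xstar"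
    define e where "e = \<alpha> *\<^sub>R avg (\<lambda>i. g i (x k i) - g i xb)"
    have "avg (x (Suc k)) = avg (y (Suc k))" by (rule avgxy)
    also have "\<dots> = xb - \<alpha> *\<^sub>R avg (\<lambda>i. g i (x k i))"
      unfolding ysuc xb_def avg_diff avg_scale ..
    finally have "avg (x (Suc k)) - xstar = a - e"
      unfolding a_def e_def Gb_def avg_diff by (simp add: algebra_simps)
    then have 1: "(norm (avg (x (Suc k)) - xstar))\<^sup>2 \<le> (1 + \<alpha> * \<delta>) * (norm a)\<^sup>2 + (1 + 1 / (\<alpha> * \<delta>)) * (norm e)\<^sup>2"
      using young_sq[of "\<alpha> * \<delta>" a e] alpha_pos \<delta> by simp
    have 2: "(norm a)\<^sup>2 \<le> (1 - \<alpha> * c2) * (norm (xb - xstar))\<^sup>2" unfolding a_def by (rule avgc)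
    have B: "norm (g i (x k i) - g i xb) \<le> L * (\<beta> ^ t k * D)" for i
    proof -
      have "norm (g i (x k i) - g i xb) \<le> Lc i * norm (x k i - xb)" by (rule g_lip)
      also have "\<dots> \<le> L * stack_norm (\<lambda>i. x k i - xb)"
        using LcL[of i] L_pos[of i] stack_norm_nth[of "\<lambda>i. x k i - xb" i]
        by (intro mult_mono) auto
      also have "\<dots> \<le> L * (\<beta> ^ t k * D)" using cons[of k] L0 unfolding xb_def by (simp add: mult_left_mono)
      finally show ?thesis .
    qed
    have ne: "norm e \<le> \<alpha> * (L * (\<beta> ^ t k * D))"
      unfolding e_def using alpha_pos avg_norm_bound[OF B] by (simp add: mult_left_mono)
    have ne2: "(norm e)\<^sup>2 \<le> \<alpha>\<^sup>2 * L\<^sup>2 * D\<^sup>2 * \<beta> ^ (2 * t k)"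
    proof -
      have "(norm e)\<^sup>2 \<le> (\<alpha> * (L * (\<beta> ^ t k * D)))\<^sup>2" by (rule power_mono[OF ne]) simp
      also have "\<dots> = \<alpha>\<^sup>2 * L\<^sup>2 * D\<^sup>2 * \<beta> ^ (2 * t k)"
        by (simp add: power_mult_distrib power_mult[symmetric] mult.commute)
      finally show ?thesis .
    qed
    have "(1 + \<alpha> * \<delta>) * (norm a)\<^sup>2 \<le> (1 + \<alpha> * \<delta>) * ((1 - \<alpha> * c2) * (norm (xb - xstar))\<^sup>2)"
      using 2 alpha_pos \<delta> by (intro mult_left_mono) auto
    moreover have "(1 + 1 / (\<alpha> * \<delta>)) * (norm e)\<^sup>2 \<le> (1 + 1 / (\<alpha> * \<delta>)) * (\<alpha>\<^sup>2 * L\<^sup>2 * D\<^sup>2 * \<beta> ^ (2 * t k))"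
      using ne2 alpha_pos \<delta> by (intro mult_left_mono) auto
    moreover have "(1 + \<alpha> * \<delta>) * ((1 - \<alpha> * c2) * (norm (xb - xstar))\<^sup>2)
        = (1 - \<alpha> * c2 + \<alpha> * \<delta> - \<alpha>\<^sup>2 * \<delta> * c2) * (norm (xb - xstar))\<^sup>2"
      by (simp add: algebra_simps power2_eq_square)
    moreover have "(1 + 1 / (\<alpha> * \<delta>)) * (\<alpha>\<^sup>2 * L\<^sup>2 * D\<^sup>2 * \<beta> ^ (2 * t k))
        = \<alpha> * (\<alpha> + 1 / \<delta>) * D\<^sup>2 * L\<^sup>2 * \<beta> ^ (2 * t k)"
      using alpha_pos \<delta> by (simp add: field_simps power2_eq_square)
    ultimately show ?thesis using 1 unfolding xb_def by linarith
  qed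
  have conv: "(\<lambda>k. avg (x k)) \<longlonglongrightarrow> xstar \<and> (\<forall>i. (\<lambda>k. x k i) \<longlonglongrightarrow> xstar)"
    if ac: "\<alpha> * c2 < 1" and tl: "filterlim t at_top sequentially"
  proof -
    have c20: "c2 > 0" unfolding c2_def using \<mu>f0 Lf0 by simp
    define \<delta> where "\<delta> = c2 / 2"
    have \<delta>0: "\<delta> > 0" using c20 by (simp add: \<delta>_def)
    define q where "q = 1 - \<alpha> * c2 + \<alpha> * \<delta> - \<alpha>\<^sup>2 * \<delta> * c2"
    have q_eq: "q = (1 - \<alpha> * c2) * (1 + \<alpha> * \<delta>)" by (simp add: q_def algebra_simps power2_eq_square)
    have q0: "q \<ge> 0" unfolding q_eq using ac alpha_pos \<delta>0 by simp
    have q1: "q < 1"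
    proof -
      have "q = 1 - \<alpha> * c2 / 2 - \<alpha> * \<alpha> * c2 * c2 / 2" by (simp add: q_def \<delta>_def power2_eq_square field_simps)
      moreover have "\<alpha> * c2 / 2 > 0" using alpha_pos c20 by simp
      moreover have "\<alpha> * \<alpha> * c2 * c2 / 2 \<ge> 0" using alpha_pos c20 by simp
      ultimately show ?thesis by linarith
    qed
    define C where "C = \<alpha> * (\<alpha> + 1 / \<delta>) * D\<^sup>2 * L\<^sup>2"
    have bt: "(\<lambda>k. \<beta> ^ t k) \<longlonglongrightarrow> 0"
    proof -
      have "(\<lambda>s. \<beta> ^ s) \<longlonglongrightarrow> 0" by (rule LIMSEQ_power_zero) (use beta_pos beta_lt1 in simp)
      from filterlim_compose[OF this tl] show ?thesis .
    qed
    have b: "(\<lambda>k. C * \<beta> ^ (2 * t k)) \<longlonglongrightarrow> 0"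
    proof -
      have "(\<lambda>k. C * (\<beta> ^ t k * \<beta> ^ t k)) \<longlonglongrightarrow> C * (0 * 0)"
        by (intro tendsto_intros bt)
      then show ?thesis by (simp add: power_add[symmetric] mult_2)
    qed
    have a_lim: "(\<lambda>k. (norm (avg (x k) - xstar))\<^sup>2) \<longlonglongrightarrow> 0"
    proof (rule seq_conv[OF _ _ q0 q1 b])
      fix k show "(norm (avg (x (Suc k)) - xstar))\<^sup>2 \<le> q * (norm (avg (x k) - xstar))\<^sup>2 + C * \<beta> ^ (2 * t k)"
        using main[OF \<delta>0, of k] unfolding q_def C_def by (simp add: mult.assoc)
    qed simp
    have an: "(\<lambda>k. norm (avg (x k) - xstar)) \<longlonglongrightarrow> 0"
    proof -
      have "(\<lambda>k. sqrt ((norm (avg (x k) - xstar))\<^sup>2)) \<longlonglongrightarrow> sqrt 0" by (intro tendsto_intros a_lim)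
      then show ?thesis by simp
    qed
    have A: "(\<lambda>k. avg (x k)) \<longlonglongrightarrow> xstar" using an by (simp add: tendsto_norm_zero_iff LIM_zero_iff)
    have "(\<lambda>k. x k i) \<longlonglongrightarrow> xstar" for i
    proof -
      have bd: "norm (x k i - xstar) \<le> \<beta> ^ t k * D + norm (avg (x k) - xstar)" for k
      proof -
        have "norm (x k i - xstar) \<le> norm (x k i - avg (x k)) + norm (avg (x k) - xstar)"
          by (rule norm_diff_triangle_ineq[of "x k i" "avg (x k)" "avg (x k)" xstar, simplified])
        also have "norm (x k i - avg (x k)) \<le> \<beta> ^ t k * D"
          using stack_norm_nth[of "\<lambda>i. x k i - avg (x k)" i] cons[of k] by simp
        finally show ?thesis by simp
      qed
      have "(\<lambda>k. \<beta> ^ t k * D + norm (avg (x k) - xstar)) \<longlonglongrightarrow> 0 * D + 0"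
        by (intro tendsto_intros bt an)
      then have h: "(\<lambda>k. \<beta> ^ t k * D + norm (avg (x k) - xstar)) \<longlonglongrightarrow> 0" by simp
      have "(\<lambda>k. norm (x k i - xstar)) \<longlonglongrightarrow> 0"
      proof (rule tendsto_sandwich[OF _ _ tendsto_const h])
        show "\<forall>\<^sub>F k in sequentially. 0 \<le> norm (x k i - xstar)" by simp
        show "\<forall>\<^sub>F k in sequentially. norm (x k i - xstar) \<le> \<beta> ^ t k * D + norm (avg (x k) - xstar)"
          by (rule always_eventually) (rule allI, rule bd)
      qed
      then show ?thesis by (simp add: tendsto_norm_zero_iff LIM_zero_iff)
    qed
    with A show ?thesis by blast
  qed
  show ?thesis
    unfolding Let_def
    using main conv
    unfolding L_def[symmetric] \<mu>f_def[symmetric] Lf_def[symmetric] c2_def[symmetric] \<nu>_def[symmetric]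
      S0_def[symmetric] U_def[symmetric] D_def[symmetric]
    by blast
qed


end
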